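(* The entanglement of the domino $D_{14}$ is at least $4$.
   Context: The domino $D_n$ is the graph with vertices $v_i,w_i$ ($i=0,\dots,n$) and edges $v_iv_{i+1},w_iw_{i+1}$ ($i=0,\dots,n-1$) and $v_iw_i$ ($i=0,\dots,n$). Entanglement: in the game $\mathrm{Ent}(G,k)$ Thief plays against $k$ cops on the undirected graph $G$. Initially no cop is placed and Thief picks a vertex. Each round, Cops may do nothing, place a new cop (at most $k$ in total) on Thief's current vertex, or move a placed cop to Thief's current vertex; then Thief must move along an edge to an adjacent vertex not occupied by a cop, and is caught (Cops win) if he cannot. Infinite plays are won by Thief. $\mathrm{Ent}(G)$ is the least $k$ for which Cops have a winning strategy. *)

theory Defs
  imports Main
begin

record 'a ugraph =
  verts :: "'a set"
  adj :: "'a \<Rightarrow> 'a \<Rightarrow> bool"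

text \<open>Domino D_n: vertices v_i = (False,i), w_i = (True,i), 0 \<le> i \<le> n.\<close>
definition domino :: "nat \<Rightarrow> (bool \<times> nat) ugraph" where
  "domino n = \<lparr> verts = {(b,i). i \<le> n},
     adj = (\<lambda>(b,i) (b',j). i \<le> n \<and> j \<le> n \<and>
              ((b = b' \<and> (j = i + 1 \<or> i = j + 1)) \<or> (b \<noteq> b' \<and> i = j))) \<rparr>"

text \<open>Possible cop moves when cops occupy the vertex set C (one cop per vertex; the number
  of cops placed so far is card C) and the thief is at v, with at most k cops in total:
  do nothing, place a new cop on v, or move a placed cop (from u) to v.\<close>
definition cop_moves :: "nat \<Rightarrow> 'a set \<Rightarrow> 'a \<Rightarrow> 'a set set" where
  "cop_moves k C v = {C} \<union> (if card C < k then {insert v C} else {})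
      \<union> {insert v (C - {u}) | u. u \<in> C}"

text \<open>cops_force G k C v: from the position where cops occupy C, the thief sits at v and
  Cops are to move, Cops (with k cops) have a strategy guaranteeing that the thief is
  eventually caught (least fixed point = attractor of the reachability game).\<close>
inductive cops_force :: "'a ugraph \<Rightarrow> nat \<Rightarrow> 'a set \<Rightarrow> 'a \<Rightarrow> bool" for G k where
  step: "C' \<in> cop_moves k C v \<Longrightarrow>
         (\<And>w. adj G v w \<Longrightarrow> w \<in> verts G \<Longrightarrow> w \<notin> C' \<Longrightarrow> cops_force G k C' w) \<Longrightarrow>
         cops_force G k C v"

definition cops_win :: "'a ugraph \<Rightarrow> nat \<Rightarrow> bool" where
  "cops_win G k \<longleftrightarrow> (\<forall>v \<in> verts G. cops_force G k {} v)"

definition entanglement :: "'a ugraph \<Rightarrow> nat" where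
  "entanglement G = (LEAST k. cops_win G k)"

end

theory Submission
  imports Defs
begin

type_synonym vx = "bool \<times> nat"

fun nbrs :: "vx \<Rightarrow> vx list" where
  "nbrs (b,i) = [(\<not>b,i)] @ (if 0 < i then [(b,i-1)] else []) @ (if i < 9 then [(b,i+1)] else [])"

definition mins :: "bool \<times> nat \<Rightarrow> (bool \<times> nat) list list" where
  "mins v = (if v = (False,0) then [[(False,1),(True,0)],[(False,2),(True,3)],[(False,2),(True,2)],[(False,2),(True,1)],[(False,3),(True,2)],[(False,1),(True,1)],[(False,1),(True,2)]]
   else if v = (False,1) then [[(False,2),(True,3)],[(False,3),(True,2)],[(False,2),(True,1)],[(False,2),(True,2)]]
   else if v = (False,2) then [[(False,3),(True,3)],[(False,3),(True,2)],[(False,1),(False,3),(True,4)],[(False,4),(True,3)]]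
   else if v = (False,3) then [[(False,4),(True,3)]]
   else if v = (False,4) then [[(False,3),(False,5),(True,4)]]
   else if v = (False,5) then [[(False,4),(False,6),(True,5)]]
   else if v = (False,6) then [[(False,5),(True,6)]]
   else if v = (False,7) then [[(False,6),(True,6)],[(False,6),(False,8),(True,5)],[(False,5),(True,6)],[(False,6),(True,7)]]
   else if v = (False,8) then [[(False,7),(True,8)],[(False,7),(True,6)],[(False,7),(True,7)],[(False,6),(True,7)]]
   else if v = (False,9) then [[(False,7),(True,8)],[(False,7),(True,6)],[(False,7),(True,7)],[(False,8),(True,8)],[(False,8),(True,7)],[(False,8),(True,9)],[(False,6),(True,7)]]
   else if v = (True,0) then [[(False,2),(True,3)],[(False,2),(True,2)],[(False,0),(True,1)],[(False,2),(True,1)],[(False,3),(True,2)],[(False,1),(True,1)],[(False,1),(True,2)]]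
   else if v = (True,1) then [[(False,2),(True,3)],[(False,3),(True,2)],[(False,2),(True,2)],[(False,1),(True,2)]]
   else if v = (True,2) then [[(False,2),(True,3)],[(False,4),(True,1),(True,3)],[(False,3),(True,3)],[(False,3),(True,4)]]
   else if v = (True,3) then [[(False,3),(True,4)]]
   else if v = (True,4) then [[(False,4),(True,3),(True,5)]]
   else if v = (True,5) then [[(False,5),(True,4),(True,6)]]
   else if v = (True,6) then [[(False,6),(True,5)]]
   else if v = (True,7) then [[(False,6),(True,6)],[(False,7),(True,6)],[(False,6),(True,5)],[(False,5),(True,6),(True,8)]]
   else if v = (True,8) then [[(False,8),(True,7)],[(False,7),(True,6)],[(False,7),(True,7)],[(False,6),(True,7)]]
   else [[(False,7),(True,8)],[(False,7),(True,6)],[(False,7),(True,7)],[(False,8),(True,8)],[(False,8),(True,7)],[(False,6),(True,7)],[(False,9),(True,8)]])"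

definition rel :: "bool \<times> nat \<Rightarrow> (bool \<times> nat) list" where
  "rel v = (if v = (False,0) then [(False,0),(False,1),(False,2),(False,3),(True,0),(True,1),(True,2),(True,3)]
   else if v = (False,1) then [(False,0),(False,1),(False,2),(False,3),(False,4),(True,0),(True,1),(True,2),(True,3),(True,4)]
   else if v = (False,2) then [(False,1),(False,2),(False,3),(False,4),(True,1),(True,2),(True,3),(True,4)]
   else if v = (False,3) then [(False,1),(False,2),(False,3),(False,4),(False,5),(True,2),(True,3),(True,4)]
   else if v = (False,4) then [(False,3),(False,4),(False,5),(False,6),(True,3),(True,4),(True,5)]
   else if v = (False,5) then [(False,3),(False,4),(False,5),(False,6),(True,4),(True,5),(True,6)]
   else if v = (False,6) then [(False,4),(False,5),(False,6),(False,7),(False,8),(True,5),(True,6),(True,7)]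
   else if v = (False,7) then [(False,5),(False,6),(False,7),(False,8),(True,5),(True,6),(True,7),(True,8)]
   else if v = (False,8) then [(False,5),(False,6),(False,7),(False,8),(False,9),(True,5),(True,6),(True,7),(True,8),(True,9)]
   else if v = (False,9) then [(False,6),(False,7),(False,8),(False,9),(True,6),(True,7),(True,8),(True,9)]
   else if v = (True,0) then [(False,0),(False,1),(False,2),(False,3),(True,0),(True,1),(True,2),(True,3)]
   else if v = (True,1) then [(False,0),(False,1),(False,2),(False,3),(False,4),(True,0),(True,1),(True,2),(True,3),(True,4)]
   else if v = (True,2) then [(False,1),(False,2),(False,3),(False,4),(True,1),(True,2),(True,3),(True,4)]
   else if v = (True,3) then [(False,2),(False,3),(False,4),(True,1),(True,2),(True,3),(True,4),(True,5)]
   else if v = (True,4) then [(False,3),(False,4),(False,5),(True,3),(True,4),(True,5),(True,6)]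
   else if v = (True,5) then [(False,4),(False,5),(False,6),(True,3),(True,4),(True,5),(True,6)]
   else if v = (True,6) then [(False,5),(False,6),(False,7),(True,4),(True,5),(True,6),(True,7),(True,8)]
   else if v = (True,7) then [(False,5),(False,6),(False,7),(False,8),(True,5),(True,6),(True,7),(True,8)]
   else if v = (True,8) then [(False,5),(False,6),(False,7),(False,8),(False,9),(True,5),(True,6),(True,7),(True,8),(True,9)]
   else [(False,6),(False,7),(False,8),(False,9),(True,6),(True,7),(True,8),(True,9)])"

definition subl :: "vx list \<Rightarrow> vx list \<Rightarrow> bool" where
  "subl xs M = list_all (\<lambda>x. x \<in> set xs) M"

definition badl :: "vx list \<Rightarrow> vx \<Rightarrow> bool" where
  "badl xs v = list_ex (subl xs) (mins v)"

definition okw :: "vx list \<Rightarrow> vx \<Rightarrow> bool" where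
  "okw ys w = (w \<notin> set ys \<and> \<not> badl ys w)"

definition Rl :: "vx list \<Rightarrow> vx \<Rightarrow> bool" where
  "Rl ys v = list_ex (okw ys) (nbrs v)"

definition Ru :: "vx \<Rightarrow> vx list \<Rightarrow> vx \<Rightarrow> bool" where
  "Ru v xs u = Rl (v # removeAll u xs) v"

definition chk :: "vx \<Rightarrow> vx list \<Rightarrow> bool" where
  "chk v xs = (v \<notin> set xs \<and> \<not> badl xs v \<longrightarrow>
     Rl xs v \<and> (length xs < 3 \<longrightarrow> Rl (v # xs) v) \<and> list_all (Ru v xs) xs)"

fun subs :: "nat \<Rightarrow> 'a list \<Rightarrow> 'a list list" where
  "subs 0 xs = [[]]"
| "subs (Suc k) [] = [[]]"
| "subs (Suc k) (x # xs) = map ((#) x) (subs k xs) @ subs (Suc k) xs"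

definition chkv :: "vx \<Rightarrow> bool" where
  "chkv v = list_all (chk v) (subs (Suc (Suc (Suc 0))) (rel v))"

definition allV :: "vx list" where
  "allV = [(b,i). b \<leftarrow> [False,True], i \<leftarrow> [0..<10]]"

lemma comp_all: "list_all chkv allV"
  by code_simp

definition relok :: "vx \<Rightarrow> bool" where
  "relok v = (v \<in> set (rel v) \<and> list_all (\<lambda>M. set M \<subseteq> set (rel v)) (mins v) \<and>
     list_all (\<lambda>w. w \<in> set (rel v) \<and> list_all (\<lambda>M. set M \<subseteq> set (rel v)) (mins w)) (nbrs v))"

lemma comp_rel: "list_all relok allV"
  by code_simp

lemma allV_iff: "(b,i) \<in> set allV \<longleftrightarrow> i < 10"
  by (cases b) (auto simp: allV_def)

lemma nbrs_ok:
  assumes "v \<in> set allV" "w \<in> set (nbrs v)"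
  shows "adj (domino 14) v w \<and> w \<in> verts (domino 14) \<and> w \<in> set allV"
proof -
  obtain b i where v: "v = (b,i)" by force
  obtain c j where w: "w = (c,j)" by force
  have "i < 10" using assms(1) v allV_iff by simp
  then show ?thesis using assms(2) v w by (auto simp: domino_def allV_iff split: if_splits)
qed

definition bad :: "vx set \<Rightarrow> vx \<Rightarrow> bool" where
  "bad C v = (\<exists>M\<in>set (mins v). set M \<subseteq> C)"

definition SS :: "(vx set \<times> vx) set" where
  "SS = {(C,v). finite C \<and> card C \<le> 3 \<and> v \<in> set allV \<and> v \<notin> C \<and> \<not> bad C v}"

lemma badl_set: "badl xs v = bad (set xs) v"
  by (auto simp: badl_def bad_def subl_def list_ex_iff list_all_iff)

lemma bad_int: "\<forall>M\<in>set (mins w). set M \<subseteq> A \<Longrightarrow> bad C w = bad (C \<inter> A) w"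
  by (auto simp: bad_def)

lemma subs_complete:
  "X \<subseteq> set xs \<Longrightarrow> card X \<le> k \<Longrightarrow> \<exists>ys\<in>set (subs k xs). set ys = X \<and> distinct ys"
proof (induction xs arbitrary: k X)
  case Nil
  then show ?case by (cases k) auto
next
  case (Cons x xs)
  have fin: "finite X" using Cons.prems(1) by (meson finite_set finite_subset)
  show ?case
  proof (cases k)
    case 0
    then have "X = {}" using Cons.prems(2) fin by simp
    then show ?thesis using 0 by simp
  next
    case (Suc k')
    show ?thesis
    proof (cases "x \<in> X")
      case True
      have "X - {x} \<subseteq> set xs" using Cons.prems(1) by auto
      moreover have "card (X - {x}) \<le> k'" using Cons.prems(2) True fin Suc by simp
      ultimately obtain ys where "ys \<in> set (subs k' xs)" "set ys = X - {x}" "distinct ys"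
        using Cons.IH by blast
      then show ?thesis using Suc True by (intro bexI[of _ "x # ys"]) auto
    next
      case False
      then have "X \<subseteq> set xs" using Cons.prems(1) by auto
      then obtain ys where "ys \<in> set (subs k xs)" "set ys = X" "distinct ys"
        using Cons.IH Cons.prems(2) by blast
      then show ?thesis using Suc by auto
    qed
  qed
qed

lemma Rl_lift:
  assumes "relok v" "Rl zs v" "set zs = C' \<inter> set (rel v)"
  shows "\<exists>w\<in>set (nbrs v). w \<notin> C' \<and> \<not> bad C' w"
proof -
  from assms(2) obtain w where w: "w \<in> set (nbrs v)" "w \<notin> set zs" "\<not> badl zs w"
    by (auto simp: Rl_def okw_def list_ex_iff)
  have wr: "w \<in> set (rel v)" "\<forall>M\<in>set (mins w). set M \<subseteq> set (rel v)"
    using assms(1) w(1) by (auto simp: relok_def list_all_iff)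
  have "w \<notin> C'" using w(2) wr(1) assms(3) by auto
  moreover have "\<not> bad C' w"
    using w(3) bad_int[OF wr(2), of C'] assms(3) by (simp add: badl_set)
  ultimately show ?thesis using w(1) by blast
qed

lemma closure:
  assumes k: "k \<le> 3" and S: "(C,v) \<in> SS" and mv: "C' \<in> cop_moves k C v"
  shows "\<exists>w. adj (domino 14) v w \<and> w \<in> verts (domino 14) \<and> w \<notin> C' \<and> (C',w) \<in> SS"
proof -
  from S have fin: "finite C" and cC: "card C \<le> 3" and vV: "v \<in> set allV" and vC: "v \<notin> C"
    and nb: "\<not> bad C v" by (auto simp: SS_def)
  have rok: "relok v" using comp_rel vV by (simp add: list_all_iff)
  have ck: "chkv v" using comp_all vV by (simp add: list_all_iff)
  define A where "A = set (rel v)"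
  have vA: "v \<in> A" and mA: "\<forall>M\<in>set (mins v). set M \<subseteq> A"
    using rok by (auto simp: relok_def list_all_iff A_def)
  have cX: "card (C \<inter> A) \<le> card C" using fin by (simp add: card_mono)
  obtain ys where ys: "ys \<in> set (subs (Suc (Suc (Suc 0))) (rel v))" "set ys = C \<inter> A" "distinct ys"
    using subs_complete[of "C \<inter> A" "rel v" "Suc (Suc (Suc 0))"] cX cC A_def by auto
  have chk: "chk v ys" using ck ys(1) by (simp add: chkv_def list_all_iff)
  have pre: "v \<notin> set ys \<and> \<not> badl ys v"
    using ys(2) vC nb bad_int[OF mA, of C] by (simp add: badl_set)
  have lenys: "length ys = card (C \<inter> A)" using ys(2,3) by (metis distinct_card)
  have R: "\<exists>w\<in>set (nbrs v). w \<notin> C' \<and> \<not> bad C' w" and fin': "finite C'" and cC': "card C' \<le> 3"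
  proof -
    have "(Rl ys v \<and> set ys = C' \<inter> A \<and> C' = C) \<or>
          (Rl (v # ys) v \<and> set (v # ys) = C' \<inter> A \<and> card C' \<le> 3 \<and> finite C') \<or>
          (\<exists>u\<in>set ys. Rl (v # removeAll u ys) v \<and> set (v # removeAll u ys) = C' \<inter> A
             \<and> card C' \<le> 3 \<and> finite C')"
    proof -
      from mv consider "C' = C" | "card C < k" "C' = insert v C" | u where "u \<in> C" "C' = insert v (C - {u})"
        by (auto simp: cop_moves_def split: if_splits)
      then show ?thesis
      proof cases
        case 1 then show ?thesis using chk pre ys(2) by (simp add: chk_def)
      next
        case 2
        have "length ys < 3" using lenys cX 2 k by simp
        then have "Rl (v # ys) v" using chk pre by (simp add: chk_def)
        moreover have "set (v # ys) = C' \<inter> A" using 2 ys(2) vA by auto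
        moreover have "card C' \<le> 3" using 2 k fin vC by simp
        ultimately show ?thesis using 2 fin by simp
      next
        case 3
        have cC'': "card C' \<le> 3"
        proof -
          have "card C' \<le> Suc (card (C - {u}))" using 3 fin by (simp add: card_insert_le_m1)
          also have "\<dots> = card C" using 3 fin by (metis card_Suc_Diff1)
          finally show ?thesis using cC by simp
        qed
        show ?thesis
        proof (cases "u \<in> A")
          case True
          then have u: "u \<in> set ys" using 3 ys(2) by auto
          have "Ru v ys u" using chk pre u by (simp add: chk_def list_all_iff)
          moreover have "set (v # removeAll u ys) = C' \<inter> A" using 3 ys(2) vA by auto
          ultimately show ?thesis using u cC'' 3 fin by (auto simp: Ru_def)
        next
          case False
          have "C \<inter> A \<subseteq> C - {u}" using False by auto
          then have "card (C \<inter> A) \<le> card (C - {u})" using fin by (simp add: card_mono)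
          also have "\<dots> < card C" using 3 fin by (metis card_Diff1_less)
          finally have "length ys < 3" using lenys cC by simp
          then have "Rl (v # ys) v" using chk pre by (simp add: chk_def)
          moreover have "set (v # ys) = C' \<inter> A" using 3 ys(2) vA False by auto
          ultimately show ?thesis using cC'' 3 fin by simp
        qed
      qed
    qed
    then show "\<exists>w\<in>set (nbrs v). w \<notin> C' \<and> \<not> bad C' w" "finite C'" "card C' \<le> 3"
      using Rl_lift[OF rok, of _ C'] A_def fin cC by auto
  qed
  then obtain w where w: "w \<in> set (nbrs v)" "w \<notin> C'" "\<not> bad C' w" by blast
  have "adj (domino 14) v w \<and> w \<in> verts (domino 14) \<and> w \<in> set allV"
    using nbrs_ok[OF vV w(1)] by simp
  then show ?thesis using w fin' cC' unfolding SS_def by blast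
qed

lemma not_force:
  "cops_force (domino 14) k C v \<Longrightarrow> k \<le> 3 \<Longrightarrow> (C,v) \<notin> SS"
proof (induction rule: cops_force.induct)
  case (step C' C v)
  show ?case
  proof
    assume "(C,v) \<in> SS"
    then obtain w where "adj (domino 14) v w" "w \<in> verts (domino 14)" "w \<notin> C'" "(C',w) \<in> SS"
      using closure[OF step.prems \<open>(C,v) \<in> SS\<close> step.hyps(1)] by blast
    then show False using step.IH step.prems by blast
  qed
qed

theorem mainTheorem13:
  shows "\<forall>k. cops_win (domino 14) k \<longrightarrow> 4 \<le> k"
proof (intro allI impI)
  fix k assume cw: "cops_win (domino 14) k"
  show "4 \<le> k"
  proof (rule ccontr)
    assume "\<not> 4 \<le> k"
    then have k: "k \<le> 3" by simp
    have "(False, 0::nat) \<in> verts (domino 14)" by (simp add: domino_def)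
    then have "cops_force (domino 14) k {} (False,0)" using cw by (simp add: cops_win_def)
    moreover have "({}, (False,0)) \<in> SS"
      by (simp add: SS_def bad_def allV_def mins_def)
    ultimately show False using not_force k by blast
  qed
qed

end
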